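(* Under the setup in the context (no assumption that $\hat\beta_{ols}\neq\hat\beta_{2sls}$), one has $\hat\sigma_{2sls}^2\ge\hat\sigma_{ols}^2\ge\hat\sigma_u^2$ and $t_{CF}\ge t_{H_1}\ge t_{H_2}\ge t_{H_3}$.
   Context: Data: $Y_1$ is an $n\times k_1$ matrix, $Y_2$ an $n\times 1$ vector, $Z_1$ an $n\times p_1$ matrix, $Z_2$ an $n\times p_2$ matrix, all real; $Z\equiv(Z_1,Z_2)$ and $X\equiv(Y_1,Z_1)$. For a matrix $A$ with $A^\top A$ nonsingular, $P_A\equiv A(A^\top A)^{-1}A^\top$ and $M_A\equiv I_n-P_A$. Standing assumptions: $Z^\top Z$, $X^\top X$, $X^\top P_Z X$ and $(X,\hat V)^\top(X,\hat V)$ are nonsingular, where $\hat V\equiv M_Z Y_1$. Define $\hat Y_1\equiv P_Z Y_1$, $\hat\theta_{ols}\equiv(X^\top X)^{-1}X^\top Y_2$, $\hat\theta_{2sls}\equiv(X^\top P_ZX)^{-1}X^\top P_Z Y_2$, and let $\hat\beta_{ols},\hat\beta_{2sls}$ be the leading $k_1\times1$ subvectors of $\hat\theta_{ols},\hat\theta_{2sls}$. Define $(\hat\theta_{cf}^\top,\hat\rho_{cf}^\top)^\top\equiv((X,\hat V)^\top(X,\hat V))^{-1}(X,\hat V)^\top Y_2$, $\hat\sigma_u^2\equiv n^{-1}\|Y_2-X\hat\theta_{cf}-\hat V\hat\rho_{cf}\|^2$, $\hat\sigma_{ols}^2\equiv n^{-1}\|Y_2-X\hat\theta_{ols}\|^2$,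 $\hat\sigma_{2sls}^2\equiv n^{-1}\|Y_2-X\hat\theta_{2sls}\|^2$; these three are assumed strictly positive. For scalars $s_1^2,s_2^2>0$ with $s_1^2(\hat Y_1^\top M_{Z_1}\hat Y_1)^{-1}-s_2^2(Y_1^\top M_{Z_1}Y_1)^{-1}$ nonsingular, $t_{H,n}(s_1^2,s_2^2)\equiv(\hat\beta_{ols}-\hat\beta_{2sls})^\top\big(s_1^2(\hat Y_1^\top M_{Z_1}\hat Y_1)^{-1}-s_2^2(Y_1^\top M_{Z_1}Y_1)^{-1}\big)^{-1}(\hat\beta_{ols}-\hat\beta_{2sls})$. Define $t_{H_1}\equiv t_{H,n}(\hat\sigma_{ols}^2,\hat\sigma_{ols}^2)$, $t_{H_2}\equiv t_{H,n}(\hat\sigma_{2sls}^2,\hat\sigma_{2sls}^2)$, $t_{H_3}\equiv t_{H,n}(\hat\sigma_{2sls}^2,\hat\sigma_{ols}^2)$, and the Wald statistic $t_{CF}\equiv\hat\rho_{cf}^\top\big(\hat\sigma_u^2(\hat V^\top M_X\hat V)^{-1}\big)^{-1}\hat\rho_{cf}$. *)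

theory Defs
  imports "HOL-Analysis.Analysis"
begin

text \<open>Matrices are type-indexed: an n x k matrix is real^'k^'n (rows indexed by 'n),
 column vectors of length n are real^'n.\<close>

definition hcat :: "real^'a^'n \<Rightarrow> real^'b^'n \<Rightarrow> real^('a + 'b)^'n" where
  "hcat A B = (\<chi> i j. case j of Inl a \<Rightarrow> A $ i $ a | Inr b \<Rightarrow> B $ i $ b)"

definition proj :: "real^'c^'n \<Rightarrow> real^'n^'n" where
  "proj A = A ** matrix_inv (transpose A ** A) ** transpose A"

definition resid :: "real^'c^'n \<Rightarrow> real^'n^'n" where
  "resid A = mat 1 - proj A"

definition lead :: "real^('a::finite + 'b::finite) \<Rightarrow> real^'a" where
  "lead v = (\<chi> a. v $ Inl a)"

definition trail :: "real^('a::finite + 'b::finite) \<Rightarrow> real^'b" where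
  "trail v = (\<chi> b. v $ Inr b)"

definition Zmat :: "real^'p1^'n \<Rightarrow> real^'p2^'n \<Rightarrow> real^('p1 + 'p2)^'n" where
  "Zmat Z1 Z2 = hcat Z1 Z2"

definition Xmat :: "real^'k^'n \<Rightarrow> real^'p1^'n \<Rightarrow> real^('k + 'p1)^'n" where
  "Xmat Y1 Z1 = hcat Y1 Z1"

definition Vhat :: "real^'k^'n \<Rightarrow> real^'p1^'n \<Rightarrow> real^'p2^'n \<Rightarrow> real^'k^'n" where
  "Vhat Y1 Z1 Z2 = resid (Zmat Z1 Z2) ** Y1"

definition Yhat1 :: "real^'k^'n \<Rightarrow> real^'p1^'n \<Rightarrow> real^'p2^'n \<Rightarrow> real^'k^'n" where
  "Yhat1 Y1 Z1 Z2 = proj (Zmat Z1 Z2) ** Y1"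

definition theta_ols :: "real^'k^'n \<Rightarrow> real^'n \<Rightarrow> real^'p1^'n \<Rightarrow> real^('k + 'p1)" where
  "theta_ols Y1 Y2 Z1 = (let X = Xmat Y1 Z1 in
     matrix_inv (transpose X ** X) *v (transpose X *v Y2))"

definition theta_2sls :: "real^'k^'n \<Rightarrow> real^'n \<Rightarrow> real^'p1^'n \<Rightarrow> real^'p2^'n \<Rightarrow> real^('k + 'p1)" where
  "theta_2sls Y1 Y2 Z1 Z2 = (let X = Xmat Y1 Z1; P = proj (Zmat Z1 Z2) in
     matrix_inv (transpose X ** P ** X) *v (transpose X *v (P *v Y2)))"

definition beta_ols where "beta_ols Y1 Y2 Z1 = lead (theta_ols Y1 Y2 Z1)"
definition beta_2sls where "beta_2sls Y1 Y2 Z1 Z2 = lead (theta_2sls Y1 Y2 Z1 Z2)"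

definition cf_coef :: "real^'k^'n \<Rightarrow> real^'n \<Rightarrow> real^'p1^'n \<Rightarrow> real^'p2^'n \<Rightarrow> real^(('k + 'p1) + 'k)" where
  "cf_coef Y1 Y2 Z1 Z2 = (let W = hcat (Xmat Y1 Z1) (Vhat Y1 Z1 Z2) in
     matrix_inv (transpose W ** W) *v (transpose W *v Y2))"

definition theta_cf where "theta_cf Y1 Y2 Z1 Z2 = lead (cf_coef Y1 Y2 Z1 Z2)"
definition rho_cf where "rho_cf Y1 Y2 Z1 Z2 = trail (cf_coef Y1 Y2 Z1 Z2)"

definition sigma2_u :: "real^'k^'n \<Rightarrow> real^'n \<Rightarrow> real^'p1^'n \<Rightarrow> real^'p2^'n \<Rightarrow> real" where
  "sigma2_u Y1 Y2 Z1 Z2 = (norm (Y2 - Xmat Y1 Z1 *v theta_cf Y1 Y2 Z1 Z2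
       - Vhat Y1 Z1 Z2 *v rho_cf Y1 Y2 Z1 Z2))\<^sup>2 / real CARD('n)"

definition sigma2_ols :: "real^'k^'n \<Rightarrow> real^'n \<Rightarrow> real^'p1^'n \<Rightarrow> real" where
  "sigma2_ols Y1 Y2 Z1 = (norm (Y2 - Xmat Y1 Z1 *v theta_ols Y1 Y2 Z1))\<^sup>2 / real CARD('n)"

definition sigma2_2sls :: "real^'k^'n \<Rightarrow> real^'n \<Rightarrow> real^'p1^'n \<Rightarrow> real^'p2^'n \<Rightarrow> real" where
  "sigma2_2sls Y1 Y2 Z1 Z2 = (norm (Y2 - Xmat Y1 Z1 *v theta_2sls Y1 Y2 Z1 Z2))\<^sup>2 / real CARD('n)"

definition hmat :: "real^'k^'n \<Rightarrow> real^'p1^'n \<Rightarrow> real^'p2^'n \<Rightarrow> real \<Rightarrow> real \<Rightarrow> real^'k^'k" where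
  "hmat Y1 Z1 Z2 s1 s2 = (let Yh = Yhat1 Y1 Z1 Z2; M = resid Z1 in
     s1 *\<^sub>R matrix_inv (transpose Yh ** M ** Yh) - s2 *\<^sub>R matrix_inv (transpose Y1 ** M ** Y1))"

definition tH :: "real^'k^'n \<Rightarrow> real^'n \<Rightarrow> real^'p1^'n \<Rightarrow> real^'p2^'n \<Rightarrow> real \<Rightarrow> real \<Rightarrow> real" where
  "tH Y1 Y2 Z1 Z2 s1 s2 = (let d = beta_ols Y1 Y2 Z1 - beta_2sls Y1 Y2 Z1 Z2 in
     d \<bullet> (matrix_inv (hmat Y1 Z1 Z2 s1 s2) *v d))"

definition tCF :: "real^'k^'n \<Rightarrow> real^'n \<Rightarrow> real^'p1^'n \<Rightarrow> real^'p2^'n \<Rightarrow> real" where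
  "tCF Y1 Y2 Z1 Z2 = (let rho = rho_cf Y1 Y2 Z1 Z2; V = Vhat Y1 Z1 Z2 in
     rho \<bullet> (matrix_inv (sigma2_u Y1 Y2 Z1 Z2 *\<^sub>R
        matrix_inv (transpose V ** resid (Xmat Y1 Z1) ** V)) *v rho))"

end

theory Submission
  imports Defs
begin


declare transpose_matrix_vector[simp del]

definition symm :: "real^'k^'k \<Rightarrow> bool" where
  "symm M \<longleftrightarrow> (\<forall>x y. x \<bullet> (M *v y) = (M *v x) \<bullet> y)"
definition psd :: "real^'k^'k \<Rightarrow> bool" where
  "psd M \<longleftrightarrow> (\<forall>x. 0 \<le> x \<bullet> (M *v x))"

lemma inv_ok:
  fixes M :: "real^'k^'k"
  assumes "invertible M"
  shows "M ** matrix_inv M = mat 1" "matrix_inv M ** M = mat 1"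
proof -
  have "\<exists>A'. M ** A' = mat 1 \<and> A' ** M = mat 1" using assms unfolding invertible_def by blast
  then have "M ** matrix_inv M = mat 1 \<and> matrix_inv M ** M = mat 1"
    unfolding matrix_inv_def by (rule someI_ex)
  then show "M ** matrix_inv M = mat 1" "matrix_inv M ** M = mat 1" by auto
qed

lemma inv_l: "invertible (M::real^'k^'k) \<Longrightarrow> matrix_inv M *v (M *v x) = x"
  by (simp add: inv_ok matrix_vector_mul_assoc)
lemma inv_r: "invertible (M::real^'k^'k) \<Longrightarrow> M *v (matrix_inv M *v x) = x"
  by (simp add: inv_ok matrix_vector_mul_assoc)

lemma inv_ker: "invertible (M::real^'k^'k) \<longleftrightarrow> (\<forall>x. M *v x = 0 \<longrightarrow> x = 0)"
  by (simp add: invertible_left_inverse matrix_left_invertible_ker)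

lemma dot_tr: "x \<bullet> (M *v y) = (transpose M *v x) \<bullet> (y::real^'a)"
  by (simp add: dot_lmul_matrix transpose_matrix_vector)

lemma vec_eq_dot: "(\<And>v. v \<bullet> (a::real^'a) = v \<bullet> b) \<Longrightarrow> a = b"
  by (metis eq_iff_diff_eq_0 inner_diff_right inner_eq_zero_iff)

lemma inv_unique:
  fixes N B :: "real^'k^'k"
  assumes "invertible N" "N ** B = mat 1"
  shows "matrix_inv N = B"
proof -
  have "matrix_inv N = matrix_inv N ** (N ** B)" by (simp add: assms(2))
  also have "\<dots> = B" by (metis matrix_mul_assoc inv_ok(2) assms(1) matrix_mul_lid)
  finally show ?thesis .
qed

lemma inv_scaleR:
  fixes M :: "real^'k^'k"
  assumes "invertible M" "c \<noteq> 0"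
  shows "matrix_inv (c *\<^sub>R M) = (1/c) *\<^sub>R matrix_inv M"
  using assms
  by (intro inv_unique) (simp_all add: scalar_invertible matrix_scalar_ac inv_ok)

lemma inv_inv:
  fixes M :: "real^'k^'k"
  assumes "invertible M"
  shows "invertible (matrix_inv M)" "matrix_inv (matrix_inv M) = M"
proof -
  show i: "invertible (matrix_inv M)" using inv_ok[OF assms] invertible_def by blast
  show "matrix_inv (matrix_inv M) = M" by (rule inv_unique[OF i]) (simp add: inv_ok assms)
qed

lemma symm_inv:
  fixes M :: "real^'k^'k"
  assumes "symm M" "invertible M"
  shows "symm (matrix_inv M)"
  unfolding symm_def
proof (intro allI)
  fix x y
  have "x \<bullet> (matrix_inv M *v y) = (M *v (matrix_inv M *v x)) \<bullet> (matrix_inv M *v y)"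
    by (simp add: inv_r assms)
  also have "\<dots> = (matrix_inv M *v x) \<bullet> (M *v (matrix_inv M *v y))"
    using assms(1) unfolding symm_def by metis
  also have "\<dots> = (matrix_inv M *v x) \<bullet> y" by (simp add: inv_r assms)
  finally show "x \<bullet> (matrix_inv M *v y) = (matrix_inv M *v x) \<bullet> y" .
qed

lemma psd_inv:
  fixes M :: "real^'k^'k"
  assumes "psd M" "symm M" "invertible M"
  shows "psd (matrix_inv M)"
  unfolding psd_def
proof
  fix x
  have "x \<bullet> (matrix_inv M *v x) = (M *v (matrix_inv M *v x)) \<bullet> (matrix_inv M *v x)"
    by (simp add: inv_r assms)
  also have "\<dots> = (matrix_inv M *v x) \<bullet> (M *v (matrix_inv M *v x))" by (simp add: inner_commute)
  finally show "0 \<le> x \<bullet> (matrix_inv M *v x)" using assms(1) unfolding psd_def by metis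
qed

lemma key_ineq:
  fixes P Q :: "real^'k^'k"
  assumes sP: "symm P" and pP: "psd P" and iP: "invertible P" and pQ: "psd Q"
    and iPQ: "invertible (P + Q)"
  shows "x \<bullet> (matrix_inv (P + Q) *v x) \<le> x \<bullet> (matrix_inv P *v x)"
proof -
  define y where "y = matrix_inv (P + Q) *v x"
  define z where "z = matrix_inv P *v x"
  have Py: "P *v y + Q *v y = x" using inv_r[OF iPQ] by (simp add: y_def algebra_simps)
  have Pz: "P *v z = x" using inv_r[OF iP] by (simp add: z_def)
  have "0 \<le> (z - y) \<bullet> (P *v (z - y))" using pP unfolding psd_def by blast
  also have "\<dots> = z \<bullet> (P *v z) - z \<bullet> (P *v y) - y \<bullet> (P *v z) + y \<bullet> (P *v y)"
    by (simp add: algebra_simps inner_diff_left inner_diff_right)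
  also have "z \<bullet> (P *v y) = (P *v z) \<bullet> y" using sP unfolding symm_def by blast
  finally have 1: "0 \<le> z \<bullet> x - 2 * (x \<bullet> y) + y \<bullet> (P *v y)"
    by (simp add: Pz inner_commute)
  have "y \<bullet> x = y \<bullet> (P *v y) + y \<bullet> (Q *v y)" using Py by (metis inner_add_right)
  moreover have "0 \<le> y \<bullet> (Q *v y)" using pQ unfolding psd_def by blast
  ultimately have "y \<bullet> (P *v y) \<le> x \<bullet> y" by (simp add: inner_commute)
  with 1 have "x \<bullet> y \<le> z \<bullet> x" by linarith
  then show ?thesis by (simp add: y_def z_def inner_commute)
qed

lemma gram_inv:
  fixes A :: "real^'c^'n"
  shows "invertible (transpose A ** A) \<longleftrightarrow> (\<forall>u. A *v u = 0 \<longrightarrow> u = 0)"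
proof -
  have "(transpose A ** A) *v u = 0 \<longleftrightarrow> A *v u = 0" for u
  proof
    assume "(transpose A ** A) *v u = 0"
    then have "u \<bullet> ((transpose A ** A) *v u) = 0" by simp
    then have "(A *v u) \<bullet> (A *v u) = 0"
      using dot_tr[of u "transpose A" "A *v u"] by (simp add: matrix_vector_mul_assoc[symmetric])
    then show "A *v u = 0" by simp
  next
    assume "A *v u = 0"
    then show "(transpose A ** A) *v u = 0" by (simp add: matrix_vector_mul_assoc[symmetric])
  qed
  then show ?thesis by (simp add: inv_ker)
qed

context
  fixes A :: "real^'c^'n"
  assumes gA: "invertible (transpose A ** A)"
begin

lemma proj_v: "proj A *v y = A *v (matrix_inv (transpose A ** A) *v (transpose A *v y))"
  by (simp add: proj_def matrix_vector_mul_assoc[symmetric])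

lemma resid_v: "resid A *v y = y - proj A *v y"
  by (simp add: resid_def matrix_vector_mult_diff_rdistrib)

lemma tr_resid: "transpose A *v (resid A *v y) = 0"
proof -
  have "transpose A *v (A *v (matrix_inv (transpose A ** A) *v (transpose A *v y)))
     = (transpose A ** A) *v (matrix_inv (transpose A ** A) *v (transpose A *v y))"
    by (metis matrix_vector_mul_assoc)
  then have "transpose A *v (A *v (matrix_inv (transpose A ** A) *v (transpose A *v y))) = transpose A *v y"
    by (simp add: inv_r gA)
  then show ?thesis by (simp add: resid_v proj_v matrix_vector_mult_diff_distrib)
qed

lemma proj_A: "proj A *v (A *v u) = A *v u"
proof -
  have "transpose A *v (A *v u) = (transpose A ** A) *v u" by (simp add: matrix_vector_mul_assoc)
  then show ?thesis by (simp add: proj_v inv_l gA)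
qed

lemma resid_A: "resid A *v (A *v u) = 0"
  by (simp add: resid_v proj_A)

lemma proj_resid: "proj A *v (resid A *v y) = 0"
  by (simp add: proj_v tr_resid)

lemma resid_decomp: "y = resid A *v y + A *v (matrix_inv (transpose A ** A) *v (transpose A *v y))"
  by (simp add: resid_v proj_v)

lemma resid_dot: "x \<bullet> (resid A *v y) = (resid A *v x) \<bullet> (resid A *v y)"
proof -
  have "x \<bullet> (resid A *v y) = (resid A *v x + A *v (matrix_inv (transpose A ** A) *v (transpose A *v x))) \<bullet> (resid A *v y)"
    using resid_decomp by metis
  also have "\<dots> = (resid A *v x) \<bullet> (resid A *v y)"
  proof -
    have "(A *v w) \<bullet> (resid A *v y) = 0" for w
      using dot_tr[of "resid A *v y" A w] tr_resid[of y] by (simp add: inner_commute)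
    then show ?thesis by (simp add: inner_add_left)
  qed
  finally show ?thesis .
qed

lemma resid_sym: "x \<bullet> (resid A *v y) = (resid A *v x) \<bullet> y"
  using resid_dot[of x y] resid_dot[of y x] by (simp add: inner_commute)

lemma proj_sym: "x \<bullet> (proj A *v y) = (proj A *v x) \<bullet> y"
  using resid_sym[of x y] by (simp add: resid_v inner_diff_left inner_diff_right inner_commute)

lemma resid_quad: "y \<bullet> (resid A *v y) = (norm (resid A *v y))\<^sup>2"
  using resid_dot[of y y] by (simp add: power2_norm_eq_inner)

lemma resid_zero: "resid A *v y = 0 \<Longrightarrow> y = A *v (matrix_inv (transpose A ** A) *v (transpose A *v y))"
  using resid_decomp[of y] by simp

lemma normal_eq: "transpose A *v (y - A *v (matrix_inv (transpose A ** A) *v (transpose A *v y))) = 0"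
  using tr_resid[of y] by (simp add: resid_v proj_v)

lemma coef_unique: "transpose A *v (y - A *v u) = 0 \<Longrightarrow>
   matrix_inv (transpose A ** A) *v (transpose A *v y) = u"
proof -
  assume "transpose A *v (y - A *v u) = 0"
  then have "transpose A *v y = (transpose A ** A) *v u"
    by (simp add: matrix_vector_mult_diff_distrib matrix_vector_mul_assoc)
  then show ?thesis by (simp add: inv_l gA)
qed

lemma resid_eq: "transpose A *v (y - A *v u) = 0 \<Longrightarrow> resid A *v y = y - A *v u"
  using coef_unique by (simp add: resid_v proj_v)

lemma lsq: "(norm (y - A *v (matrix_inv (transpose A ** A) *v (transpose A *v y))))\<^sup>2 \<le> (norm (y - A *v b))\<^sup>2"
proof -
  define c where "c = matrix_inv (transpose A ** A) *v (transpose A *v y)"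
  define r where "r = y - A *v c"
  have n: "transpose A *v r = 0" unfolding r_def c_def by (rule normal_eq)
  have "y - A *v b = r + A *v (c - b)" by (simp add: r_def matrix_vector_mult_diff_distrib)
  then have "(norm (y - A *v b))\<^sup>2 = (norm r)\<^sup>2 + (norm (A *v (c - b)))\<^sup>2 + 2 * (r \<bullet> (A *v (c - b)))"
    by (simp add: power2_norm_eq_inner inner_add_left inner_add_right inner_commute)
  also have "r \<bullet> (A *v (c - b)) = 0" by (simp add: dot_tr n)
  finally show ?thesis by (simp add: r_def c_def)
qed

end

definition join :: "real^'a \<Rightarrow> real^'b \<Rightarrow> real^('a::finite + 'b::finite)" where
  "join u w = (\<chi> j. case j of Inl a \<Rightarrow> u $ a | Inr b \<Rightarrow> w $ b)"

lemma lead_join[simp]: "lead (join u w) = u" by (simp add: lead_def join_def vec_eq_iff)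
lemma trail_join[simp]: "trail (join u w) = w" by (simp add: trail_def join_def vec_eq_iff)
lemma join_lt: "join (lead v) (trail v) = v"
  by (simp add: lead_def trail_def join_def vec_eq_iff split: sum.split)
lemma lead_diff: "lead (a - b) = lead a - lead b" by (simp add: lead_def vec_eq_iff)
lemma lead_0[simp]: "lead 0 = 0" by (simp add: lead_def vec_eq_iff)
lemma trail_0[simp]: "trail 0 = 0" by (simp add: trail_def vec_eq_iff)

lemma hcat_mv:
  fixes A :: "real^'a^'n" and B :: "real^'b^'n"
  shows "hcat A B *v v = A *v lead v + B *v trail v"
proof -
  have s: "(\<Sum>j\<in>UNIV. f j) = (\<Sum>a\<in>UNIV. f (Inl a)) + (\<Sum>b\<in>UNIV. f (Inr b))" for f :: "'a + 'b \<Rightarrow> real"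
    using sum.Plus[of "UNIV::'a set" "UNIV::'b set" f] by (simp add: comp_def)
  show ?thesis
    by (simp add: hcat_def matrix_vector_mult_def lead_def trail_def vec_eq_iff s)
qed


lemma hcat_tr:
  fixes A :: "real^'a^'n" and B :: "real^'b^'n"
  shows "transpose (hcat A B) *v r = join (transpose A *v r) (transpose B *v r)"
  by (simp add: transpose_def matrix_vector_mult_def hcat_def join_def vec_eq_iff split: sum.split)

lemma scaleR_mv: "(c *\<^sub>R (M::real^'a^'b)) *v x = c *\<^sub>R (M *v x)"
  by (simp add: matrix_vector_mult_def vec_eq_iff sum_distrib_left mult.assoc)

lemma mat_ext: "(\<And>x y. x \<bullet> ((M::real^'a^'b) *v y) = x \<bullet> (N *v y)) \<Longrightarrow> M = N"
  unfolding matrix_eq using vec_eq_dot by metis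

lemma mv3: "(A ** B ** C) *v x = A *v (B *v (C *v x))"
  by (simp add: matrix_vector_mul_assoc matrix_mul_assoc)



lemma dot_tr2: "x \<bullet> (transpose M *v y) = (M *v x) \<bullet> (y::real^'a)"
  by (metis dot_tr transpose_transpose)

lemma mv_neg: "(M::real^'a^'b) *v (- x) = - (M *v x)"
  by (metis diff_0 matrix_vector_mult_diff_distrib matrix_vector_mult_0_right)

theorem mainTheorem4:
  fixes Y1 :: "real^'k^'n" and Y2 :: "real^'n"
    and Z1 :: "real^'p1^'n" and Z2 :: "real^'p2^'n"
  defines "Z \<equiv> Zmat Z1 Z2" and "X \<equiv> Xmat Y1 Z1" and "V \<equiv> Vhat Y1 Z1 Z2"
  assumes "invertible (transpose Z ** Z)"
    and "invertible (transpose X ** X)"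
    and "invertible (transpose X ** proj Z ** X)"
    and "invertible (transpose (hcat X V) ** hcat X V)"
    and "sigma2_u Y1 Y2 Z1 Z2 > 0"
    and "sigma2_ols Y1 Y2 Z1 > 0"
    and "sigma2_2sls Y1 Y2 Z1 Z2 > 0"
    and "invertible (hmat Y1 Z1 Z2 (sigma2_ols Y1 Y2 Z1) (sigma2_ols Y1 Y2 Z1))"
    and "invertible (hmat Y1 Z1 Z2 (sigma2_2sls Y1 Y2 Z1 Z2) (sigma2_2sls Y1 Y2 Z1 Z2))"
    and "invertible (hmat Y1 Z1 Z2 (sigma2_2sls Y1 Y2 Z1 Z2) (sigma2_ols Y1 Y2 Z1))"
  shows "sigma2_2sls Y1 Y2 Z1 Z2 \<ge> sigma2_ols Y1 Y2 Z1
       \<and> sigma2_ols Y1 Y2 Z1 \<ge> sigma2_u Y1 Y2 Z1 Z2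
       \<and> tCF Y1 Y2 Z1 Z2 \<ge> tH Y1 Y2 Z1 Z2 (sigma2_ols Y1 Y2 Z1) (sigma2_ols Y1 Y2 Z1)
       \<and> tH Y1 Y2 Z1 Z2 (sigma2_ols Y1 Y2 Z1) (sigma2_ols Y1 Y2 Z1)
           \<ge> tH Y1 Y2 Z1 Z2 (sigma2_2sls Y1 Y2 Z1 Z2) (sigma2_2sls Y1 Y2 Z1 Z2)
       \<and> tH Y1 Y2 Z1 Z2 (sigma2_2sls Y1 Y2 Z1 Z2) (sigma2_2sls Y1 Y2 Z1 Z2)
           \<ge> tH Y1 Y2 Z1 Z2 (sigma2_2sls Y1 Y2 Z1 Z2) (sigma2_ols Y1 Y2 Z1)"
proof -
  note gZ = assms(4) and gX = assms(5) and gPX = assms(6) and gW = assms(7)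
  define su where "su = sigma2_u Y1 Y2 Z1 Z2"
  define s1 where "s1 = sigma2_ols Y1 Y2 Z1"
  define s2 where "s2 = sigma2_2sls Y1 Y2 Z1 Z2"
  have su0: "su > 0" and s10: "s1 > 0" and s20: "s2 > 0"
    using assms(8-10) by (simp_all add: su_def s1_def s2_def)
  define P where "P = proj Z"
  define M where "M = resid Z"
  define M1 where "M1 = resid Z1"
  define Yh where "Yh = Yhat1 Y1 Z1 Z2"
  have Yh_v: "Yh *v a = P *v (Y1 *v a)" for a
    by (simp add: Yh_def Yhat1_def P_def Z_def matrix_vector_mul_assoc)
  have V_M: "V *v a = M *v (Y1 *v a)" for a
    by (simp add: V_def Vhat_def M_def Z_def matrix_vector_mul_assoc)
  have V_v: "V *v a = Y1 *v a - Yh *v a" for a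
    by (simp add: V_M Yh_v M_def P_def resid_v[OF gZ])
  have Zj: "Z1 *v b = Z *v join b 0" for b
    by (simp add: Z_def Zmat_def hcat_mv)
  have Z1tr: "transpose Z1 *v r = lead (transpose Z *v r)" for r
    by (simp add: Z_def Zmat_def hcat_tr)
  have gZ1: "invertible (transpose Z1 ** Z1)"
    unfolding gram_inv
  proof (intro allI impI)
    fix b assume "Z1 *v b = 0"
    then have "Z *v join b 0 = 0" by (simp add: Zj)
    then show "b = 0" using gZ unfolding gram_inv by (metis lead_join lead_0)
  qed
  have PZ1: "P *v (Z1 *v b) = Z1 *v b" for b
    by (simp add: Zj P_def proj_A[OF gZ])
  have Z1M: "transpose Z1 *v (M *v y) = 0" for y
    by (simp add: Z1tr M_def tr_resid[OF gZ])
  have Z1V: "transpose Z1 *v (V *v a) = 0" for a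
    by (simp add: V_M Z1M)
  have M1V: "M1 *v (V *v a) = V *v a" for a
    using resid_eq[OF gZ1, of "V *v a" 0] by (simp add: M1_def Z1V)
  have YhV: "(Yh *v a) \<bullet> (V *v b) = 0" for a b
  proof -
    have "(Yh *v a) \<bullet> (V *v b) = (Z *v (matrix_inv (transpose Z ** Z) *v (transpose Z *v (Y1 *v a)))) \<bullet> (M *v (Y1 *v b))"
      by (simp add: Yh_v V_M P_def proj_v[OF gZ])
    also have "\<dots> = 0"
      using dot_tr[of "M *v (Y1 *v b)" Z] by (simp add: M_def tr_resid[OF gZ] inner_commute[of "Z *v _"])
    finally show ?thesis .
  qed
  have X_v: "X *v v = Y1 *v lead v + Z1 *v trail v" for v
    by (simp add: X_def Xmat_def hcat_mv)
  have Xtr: "transpose X *v r = join (transpose Y1 *v r) (transpose Z1 *v r)" for r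
    by (simp add: X_def Xmat_def hcat_tr)
  have PX: "P *v (X *v v) = X *v v - V *v lead v" for v
    by (simp add: X_v matrix_vector_right_distrib PZ1 V_v Yh_v[symmetric])
  define A where "A = transpose Yh ** M1 ** Yh"
  define C where "C = transpose Y1 ** M1 ** Y1"
  define B where "B = transpose V ** V"
  have hmat_eq: "hmat Y1 Z1 Z2 s t = s *\<^sub>R matrix_inv A - t *\<^sub>R matrix_inv C" for s t
    by (simp add: hmat_def Let_def A_def C_def Yh_def M1_def)
  have A_q: "x \<bullet> (A *v y) = (Yh *v x) \<bullet> (M1 *v (Yh *v y))" for x y
    by (simp add: A_def mv3 dot_tr2)
  have C_q: "x \<bullet> (C *v y) = (Y1 *v x) \<bullet> (M1 *v (Y1 *v y))" for x y
    by (simp add: C_def mv3 dot_tr2)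
  have B_q: "x \<bullet> (B *v y) = (V *v x) \<bullet> (V *v y)" for x y
    by (simp add: B_def matrix_vector_mul_assoc[symmetric] dot_tr2)
  have M1sym: "x \<bullet> (M1 *v y) = (M1 *v x) \<bullet> y" for x y
    by (simp add: M1_def resid_sym[OF gZ1])
  have YV: "(Y1 *v v) \<bullet> (V *v w) = v \<bullet> (B *v w)" for v w
  proof -
    have "Y1 *v v = Yh *v v + V *v v" by (simp add: V_v)
    then show ?thesis by (simp add: B_q inner_add_left YhV)
  qed
  have CAB: "C = A + B"
  proof (rule mat_ext)
    fix x y
    have "Y1 *v x = Yh *v x + V *v x" "Y1 *v y = Yh *v y + V *v y" by (simp_all add: V_v)
    then have "x \<bullet> (C *v y) = (Yh *v x + V *v x) \<bullet> (M1 *v (Yh *v y) + V *v y)"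
      by (simp add: C_q matrix_vector_right_distrib M1V)
    also have "\<dots> = x \<bullet> (A *v y) + (Yh *v x) \<bullet> (V *v y) + (V *v x) \<bullet> (M1 *v (Yh *v y)) + x \<bullet> (B *v y)"
      by (simp add: A_q B_q inner_add_left inner_add_right)
    also have "(V *v x) \<bullet> (M1 *v (Yh *v y)) = 0"
      by (simp add: M1sym M1V) (metis YhV inner_commute)
    finally show "x \<bullet> (C *v y) = x \<bullet> ((A + B) *v y)"
      by (simp add: YhV matrix_vector_mult_add_rdistrib inner_add_right)
  qed
  have symA: "symm A" unfolding symm_def
    by (metis A_q M1sym inner_commute)
  have psdA: "psd A" unfolding psd_def
    by (simp add: A_q M1_def resid_quad[OF gZ1])
  have symB: "symm B" unfolding symm_def by (metis B_q inner_commute)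
  have psdB: "psd B" unfolding psd_def by (simp add: B_q)
  have symC: "symm C" unfolding symm_def by (metis C_q M1sym inner_commute)
  have psdC: "psd C" unfolding psd_def by (simp add: C_q M1_def resid_quad[OF gZ1])
  have iA: "invertible A" unfolding inv_ker
  proof (intro allI impI)
    fix w assume "A *v w = 0"
    then have "w \<bullet> (A *v w) = 0" by simp
    then have "M1 *v (Yh *v w) = 0" by (simp add: A_q M1_def resid_quad[OF gZ1])
    then have e: "Yh *v w = Z1 *v (matrix_inv (transpose Z1 ** Z1) *v (transpose Z1 *v (Yh *v w)))"
      (is "_ = Z1 *v ?u") unfolding M1_def by (rule resid_zero[OF gZ1])
    have "P *v (X *v join w (- ?u)) = 0"
      by (subst PX) (simp add: X_v V_v mv_neg e[symmetric])
    then have "(transpose X ** proj Z ** X) *v join w (- ?u) = 0"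
      by (simp add: mv3 P_def)
    then have "join w (- ?u) = 0" using gPX unfolding inv_ker by (metis (no_types))
    then show "w = 0" by (metis lead_join lead_0)
  qed
  have iC: "invertible C" unfolding inv_ker
  proof (intro allI impI)
    fix w assume "C *v w = 0"
    then have "w \<bullet> (C *v w) = 0" by simp
    then have "M1 *v (Y1 *v w) = 0" by (simp add: C_q M1_def resid_quad[OF gZ1])
    then have e: "Y1 *v w = Z1 *v (matrix_inv (transpose Z1 ** Z1) *v (transpose Z1 *v (Y1 *v w)))"
      (is "_ = Z1 *v ?u") unfolding M1_def by (rule resid_zero[OF gZ1])
    have "X *v join w (- ?u) = 0"
      by (simp add: X_v e[symmetric] mv_neg)
    then have "join w (- ?u) = 0" using gX unfolding gram_inv by (metis (no_types))
    then show "w = 0" by (metis lead_join lead_0)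
  qed

  define W where "W = hcat X V"
  define c where "c = cf_coef Y1 Y2 Z1 Z2"
  have c_eq: "c = matrix_inv (transpose W ** W) *v (transpose W *v Y2)"
    by (simp add: c_def cf_coef_def Let_def W_def X_def V_def)
  define th where "th = lead c"
  define rho where "rho = trail c"
  have th_cf: "theta_cf Y1 Y2 Z1 Z2 = th" by (simp add: theta_cf_def th_def c_def)
  have rho_cf: "rho_cf Y1 Y2 Z1 Z2 = rho" by (simp add: rho_cf_def rho_def c_def)
  define r where "r = Y2 - W *v c"
  have nW: "transpose W *v r = 0" unfolding r_def c_eq W_def using gW by (rule normal_eq)
  have Wtr: "transpose W *v y = join (transpose X *v y) (transpose V *v y)" for y
    by (simp add: W_def hcat_tr)
  have Xr: "transpose X *v r = 0" using nW by (metis Wtr lead_join lead_0)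
  have Vr: "transpose V *v r = 0" using nW by (metis Wtr trail_join trail_0)
  have W_v: "W *v v = X *v lead v + V *v trail v" for v by (simp add: W_def hcat_mv)
  have r_eq: "r = Y2 - X *v th - V *v rho" by (simp add: r_def W_v th_def rho_def)
  have PV: "P *v (V *v a) = 0" for a by (simp add: V_M P_def M_def proj_resid[OF gZ])
  have Psym: "x \<bullet> (P *v y) = (P *v x) \<bullet> y" for x y by (simp add: P_def proj_sym[OF gZ])
  have XPr: "transpose X *v (P *v r) = 0"
  proof -
    have "v \<bullet> (transpose X *v (P *v r)) = v \<bullet> 0" for v
    proof -
      have "v \<bullet> (transpose X *v (P *v r)) = (X *v v) \<bullet> (P *v r)"
        using dot_tr[of v "transpose X" "P *v r"] by simp
      also have "\<dots> = (X *v v - V *v lead v) \<bullet> r" by (simp add: Psym PX)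
      also have "\<dots> = v \<bullet> (transpose X *v r) - lead v \<bullet> (transpose V *v r)"
        using dot_tr[of v "transpose X" r] dot_tr[of "lead v" "transpose V" r]
        by (simp add: inner_diff_left inner_diff_right inner_commute)
      finally show ?thesis by (simp add: Xr Vr)
    qed
    then show ?thesis by (rule vec_eq_dot)
  qed
  have gPX': "invertible (transpose X ** P ** X)" using gPX by (simp add: P_def)
  have th2: "theta_2sls Y1 Y2 Z1 Z2 = th"
  proof -
    have Y2e: "Y2 = r + X *v th + V *v rho" by (simp add: r_eq)
    have "transpose X *v (P *v Y2) = transpose X *v (P *v (X *v th))"
      by (simp add: Y2e matrix_vector_right_distrib PV XPr)
    also have "\<dots> = (transpose X ** proj Z ** X) *v th" by (simp add: mv3 P_def)
    finally have "transpose X *v (P *v Y2) = (transpose X ** proj Z ** X) *v th" .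
    then show ?thesis
      by (simp add: theta_2sls_def Let_def X_def[symmetric] Z_def[symmetric] P_def[symmetric] inv_l[OF gPX'])
  qed
  define tho where "tho = theta_ols Y1 Y2 Z1"
  have tho_eq: "tho = matrix_inv (transpose X ** X) *v (transpose X *v Y2)"
    by (simp add: tho_def theta_ols_def Let_def X_def)
  have nX: "transpose X *v (Y2 - X *v tho) = 0" unfolding tho_eq using gX by (rule normal_eq)
  define del where "del = tho - th"
  define d where "d = lead del"
  define e where "e = trail del"
  have d_eq: "d = beta_ols Y1 Y2 Z1 - beta_2sls Y1 Y2 Z1 Z2"
    by (simp add: d_def del_def beta_ols_def beta_2sls_def th2 tho_def lead_diff)
  define sv where "sv = X *v del - V *v rho"
  have sv_eq: "sv = r - (Y2 - X *v tho)"
    by (simp add: sv_def r_eq del_def matrix_vector_mult_diff_distrib)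
  have Xsv: "transpose X *v sv = 0"
    using nX Xr by (simp add: sv_eq matrix_vector_mult_diff_distrib)
  have Y1sv: "transpose Y1 *v sv = 0" using Xsv by (metis Xtr lead_join lead_0)
  have Z1sv: "transpose Z1 *v sv = 0" using Xsv by (metis Xtr trail_join trail_0)
  have sv_eq2: "sv = Y1 *v d + Z1 *v e - V *v rho" by (simp add: sv_def X_v d_def e_def)
  have M1sv: "M1 *v sv = sv" using resid_eq[OF gZ1, of sv 0] by (simp add: M1_def Z1sv)
  have M1Z1: "M1 *v (Z1 *v b) = 0" for b by (simp add: M1_def resid_A[OF gZ1])
  have CdBr: "C *v d = B *v rho"
  proof (rule vec_eq_dot)
    fix v
    have Y1d: "Y1 *v d = sv + V *v rho - Z1 *v e" by (simp add: sv_eq2)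
    have "M1 *v (Y1 *v d) = sv + V *v rho"
      by (simp add: Y1d matrix_vector_mult_diff_distrib matrix_vector_right_distrib M1sv M1V M1Z1)
    then have "v \<bullet> (C *v d) = (Y1 *v v) \<bullet> (sv + V *v rho)" by (simp add: C_q)
    also have "\<dots> = v \<bullet> (B *v rho)"
      using dot_tr[of v "transpose Y1" sv] by (simp add: inner_add_right YV Y1sv)
    finally show "v \<bullet> (C *v d) = v \<bullet> (B *v rho)" .
  qed
  define G where "G = transpose V ** resid X ** V"
  have G_q: "x \<bullet> (G *v y) = (V *v x) \<bullet> (resid X *v (V *v y))" for x y
    by (simp add: G_def mv3 dot_tr2)
  have MXV: "resid X *v (V *v rho) = - sv"
  proof -
    have "transpose X *v (V *v rho - X *v del) = 0"
      using Xsv by (simp add: sv_def matrix_vector_mult_diff_distrib)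
    then show ?thesis using resid_eq[OF gX] by (simp add: sv_def)
  qed
  define q where "q = (V *v rho) \<bullet> (resid X *v (V *v rho))"
  have q0: "0 \<le> q" by (simp add: q_def resid_quad[OF gX])
  have q_val: "q = rho \<bullet> (B *v rho) - d \<bullet> (B *v rho)"
  proof -
    have "q = (V *v rho) \<bullet> (V *v rho) - (Y1 *v d) \<bullet> (V *v rho) - (Z1 *v e) \<bullet> (V *v rho)"
      by (simp add: q_def MXV sv_eq2 inner_diff_right inner_add_right inner_commute)
    also have "(Z1 *v e) \<bullet> (V *v rho) = 0"
      using dot_tr[of "V *v rho" Z1 e] by (simp add: inner_commute Z1V)
    finally show ?thesis by (simp add: YV B_q)
  qed
  have iG: "invertible G" unfolding inv_ker
  proof (intro allI impI)
    fix w assume "G *v w = 0"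
    then have "w \<bullet> (G *v w) = 0" by simp
    then have "resid X *v (V *v w) = 0" by (simp add: G_q resid_quad[OF gX])
    then have e: "V *v w = X *v (matrix_inv (transpose X ** X) *v (transpose X *v (V *v w)))"
      (is "_ = X *v ?u") by (rule resid_zero[OF gX])
    have "W *v join (- ?u) w = 0"
      by (simp add: W_v e[symmetric] mv_neg)
    then have "join (- ?u) w = 0" using gW unfolding gram_inv W_def by (metis (no_types))
    then show "w = 0" by (metis trail_join trail_0)
  qed
  have tCF_eq: "tCF Y1 Y2 Z1 Z2 = q / su"
  proof -
    have "matrix_inv (su *\<^sub>R matrix_inv G) = (1/su) *\<^sub>R G"
      using inv_scaleR[OF inv_inv(1)[OF iG]] su0 by (simp add: inv_inv(2)[OF iG])
    then have "tCF Y1 Y2 Z1 Z2 = rho \<bullet> (((1/su) *\<^sub>R G) *v rho)"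
      by (simp add: tCF_def Let_def rho_cf V_def[symmetric] X_def[symmetric] G_def su_def)
    also have "\<dots> = q / su" by (simp add: scaleR_mv q_def G_q)
    finally show ?thesis .
  qed
  define D where "D = matrix_inv A - matrix_inv C"
  have hss: "hmat Y1 Z1 Z2 s s = s *\<^sub>R D" for s by (simp add: hmat_eq D_def scaleR_diff_right)
  have h21: "hmat Y1 Z1 Z2 s2 s1 = s2 *\<^sub>R D + (s2 - s1) *\<^sub>R matrix_inv C"
    by (simp add: hmat_eq D_def algebra_simps)
  have i1: "invertible (s1 *\<^sub>R D)" using assms(11) by (simp add: hss s1_def)
  have iD: "invertible D"
  proof -
    have "D = (1/s1) *\<^sub>R (s1 *\<^sub>R D)" using s10 by simp
    then show ?thesis using scalar_invertible[OF _ i1, of "1/s1"] s10 by simp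
  qed
  have DA: "D *v (A *v rho) = d"
  proof -
    have Ar: "A *v rho = C *v rho - B *v rho" by (simp add: CAB matrix_vector_mult_add_rdistrib)
    have "matrix_inv C *v (A *v rho) = rho - matrix_inv C *v (C *v d)"
      by (simp add: Ar matrix_vector_mult_diff_distrib inv_l[OF iC] CdBr)
    also have "\<dots> = rho - d" by (simp add: inv_l[OF iC])
    finally show ?thesis
      by (simp add: D_def matrix_vector_mult_diff_rdistrib inv_l[OF iA])
  qed
  have Dd: "matrix_inv D *v d = A *v rho"
    using inv_l[OF iD, of "A *v rho"] by (simp add: DA)
  have dDd: "d \<bullet> (matrix_inv D *v d) = q"
  proof -
    have "d \<bullet> (matrix_inv D *v d) = rho \<bullet> (A *v d)"
      using symA unfolding symm_def by (simp add: Dd inner_commute)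
    also have "\<dots> = rho \<bullet> (C *v d) - rho \<bullet> (B *v d)"
      by (simp add: CAB matrix_vector_mult_add_rdistrib inner_add_right)
    also have "rho \<bullet> (B *v d) = d \<bullet> (B *v rho)"
      using symB unfolding symm_def by (metis inner_commute)
    finally show ?thesis by (simp add: CdBr q_val)
  qed
  have tHss: "tH Y1 Y2 Z1 Z2 s s = q / s" if "s \<noteq> 0" for s
  proof -
    have "matrix_inv (hmat Y1 Z1 Z2 s s) = (1/s) *\<^sub>R matrix_inv D"
      using inv_scaleR[OF iD that] by (simp add: hss)
    then show ?thesis
      by (simp add: tH_def Let_def d_eq[symmetric] scaleR_mv dDd)
  qed
  have symiA: "symm (matrix_inv A)" by (rule symm_inv[OF symA iA])
  have symiC: "symm (matrix_inv C)" by (rule symm_inv[OF symC iC])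
  have symD: "symm D" unfolding symm_def
  proof (intro allI)
    fix x y
    show "x \<bullet> (D *v y) = (D *v x) \<bullet> y"
      using symiA symiC unfolding symm_def
      by (simp add: D_def matrix_vector_mult_diff_rdistrib inner_diff_left inner_diff_right)
  qed
  have psdD: "psd D" unfolding psd_def
  proof
    fix x
    have "x \<bullet> (matrix_inv C *v x) \<le> x \<bullet> (matrix_inv A *v x)"
      using key_ineq[OF symA psdA iA psdB, of x] iC by (simp add: CAB)
    then show "0 \<le> x \<bullet> (D *v x)"
      by (simp add: D_def matrix_vector_mult_diff_rdistrib inner_diff_right)
  qed
  have psdiC: "psd (matrix_inv C)" by (rule psd_inv[OF psdC symC iC])
  have s21: "s1 \<le> s2" and s1u: "su \<le> s1"
  proof -
    have cpos: "0 < real CARD('n)" by simp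
    have su_eq: "su = (norm r)\<^sup>2 / real CARD('n)"
      by (simp add: su_def sigma2_u_def th_cf rho_cf X_def[symmetric] V_def[symmetric] r_eq)
    have s1_eq: "s1 = (norm (Y2 - X *v tho))\<^sup>2 / real CARD('n)"
      by (simp add: s1_def sigma2_ols_def X_def[symmetric] tho_def)
    have s2_eq: "s2 = (norm (Y2 - X *v th))\<^sup>2 / real CARD('n)"
      by (simp add: s2_def sigma2_2sls_def X_def[symmetric] th2)
    have gW': "invertible (transpose W ** W)" using gW by (simp add: W_def)
    have "(norm r)\<^sup>2 \<le> (norm (Y2 - W *v join tho 0))\<^sup>2"
      using lsq[OF gW', of Y2 "join tho 0"] by (simp add: r_def c_eq)
    also have "W *v join tho 0 = X *v tho" by (simp add: W_v)
    finally have "(norm r)\<^sup>2 \<le> (norm (Y2 - X *v tho))\<^sup>2" .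
    then show "su \<le> s1" unfolding su_eq s1_eq using cpos by (simp add: divide_right_mono)
    have "(norm (Y2 - X *v tho))\<^sup>2 \<le> (norm (Y2 - X *v th))\<^sup>2"
      using lsq[OF gX, of Y2 th] by (simp add: tho_eq)
    then show "s1 \<le> s2" unfolding s2_eq s1_eq using cpos by (simp add: divide_right_mono)
  qed
  have tH21: "tH Y1 Y2 Z1 Z2 s2 s1 \<le> q / s2"
  proof -
    have sP: "symm (s2 *\<^sub>R D)" using symD unfolding symm_def by (simp add: scaleR_mv)
    have pP: "psd (s2 *\<^sub>R D)" using psdD s20 unfolding psd_def by (simp add: scaleR_mv)
    have iP: "invertible (s2 *\<^sub>R D)" using assms(12) by (simp add: hss s2_def)
    have pQ: "psd ((s2 - s1) *\<^sub>R matrix_inv C)" using psdiC s21 unfolding psd_def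
      by (simp add: scaleR_mv)
    have iPQ: "invertible (s2 *\<^sub>R D + (s2 - s1) *\<^sub>R matrix_inv C)"
      using assms(13) h21 by (simp add: s1_def s2_def)
    have "tH Y1 Y2 Z1 Z2 s2 s1 = d \<bullet> (matrix_inv (s2 *\<^sub>R D + (s2 - s1) *\<^sub>R matrix_inv C) *v d)"
      by (simp add: tH_def Let_def d_eq[symmetric] h21)
    also have "\<dots> \<le> d \<bullet> (matrix_inv (s2 *\<^sub>R D) *v d)" by (rule key_ineq[OF sP pP iP pQ iPQ])
    also have "\<dots> = tH Y1 Y2 Z1 Z2 s2 s2" by (simp add: tH_def Let_def d_eq[symmetric] hss)
    also have "\<dots> = q / s2" using tHss s20 by simp
    finally show ?thesis .
  qed
  have f1: "q / s1 \<le> q / su" using q0 s1u su0 s10 by (intro divide_left_mono) auto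
  have f2: "q / s2 \<le> q / s1" using q0 s21 s10 s20 by (intro divide_left_mono) auto
  show ?thesis
    using s21 s1u f1 f2 tH21 tCF_eq tHss[of s1] tHss[of s2] s10 s20
    by (simp add: su_def s1_def s2_def)
qed

end
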